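(* Let $x\in\mathbb{R}_{\mathrm{alg}}^\times$ and $p\in\mathcal{P}_{KZ}$ with $p\notin\mathbb{R}_{\mathrm{alg}}$. Then $\deg(xp)=\deg(p)$.
   Context: $\mathbb{R}_{\mathrm{alg}}=\mathbb{R}\cap\overline{\mathbb{Q}}$. Semialgebraic subsets of $\mathbb{R}^n$ are finite unions of finite intersections of sets $\{f=0\}$, $\{g>0\}$ with $f,g\in\mathbb{R}_{\mathrm{alg}}[T_1,\dots,T_n]$; $\mathcal{SA}^n$ denotes those with nonempty interior. A period is a real number $\int_X (P/Q)(x)\,dx$ (absolutely convergent) with $X\in\mathcal{SA}^n$, $P,Q\in\mathbb{R}_{\mathrm{alg}}[T_1,\dots,T_n]$, $Q$ not identically zero on $X$; $\mathcal{P}_{KZ}$ is the set of periods (it is an $\mathbb{R}_{\mathrm{alg}}$-algebra). For a nonzero period $p$ there exists a positive integer $k$ and a compact $K\in\mathcal{SA}^k$ with $|p|=\mathrm{vol}_k(K)$; $\deg(p)$ is the smallest such $k$, and $\deg(0)=0$. *)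

theory Defs
  imports "HOL-Analysis.Analysis" "HOL-Computational_Algebra.Polynomial"
begin

definition real_alg :: "real \<Rightarrow> bool" where
  "real_alg x \<longleftrightarrow> algebraic x"

text \<open>Points of R^n are represented as extensional functions on {..<n}
  (the carrier of the product measure below).\<close>
abbreviation Rn :: "nat \<Rightarrow> (nat \<Rightarrow> real) set" where
  "Rn n \<equiv> PiE {..<n} (\<lambda>_. UNIV)"

abbreviation lebn :: "nat \<Rightarrow> (nat \<Rightarrow> real) measure" where
  "lebn n \<equiv> PiM {..<n} (\<lambda>_. lborel)"

inductive_set alg_poly :: "nat \<Rightarrow> ((nat \<Rightarrow> real) \<Rightarrow> real) set" for n :: nat where
  const: "real_alg c \<Longrightarrow> (\<lambda>x. c) \<in> alg_poly n"
| var: "i < n \<Longrightarrow> (\<lambda>x. x i) \<in> alg_poly n"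
| add: "f \<in> alg_poly n \<Longrightarrow> g \<in> alg_poly n \<Longrightarrow> (\<lambda>x. f x + g x) \<in> alg_poly n"
| mult: "f \<in> alg_poly n \<Longrightarrow> g \<in> alg_poly n \<Longrightarrow> (\<lambda>x. f x * g x) \<in> alg_poly n"

inductive_set semialg :: "nat \<Rightarrow> (nat \<Rightarrow> real) set set" for n :: nat where
  zero: "f \<in> alg_poly n \<Longrightarrow> {x \<in> Rn n. f x = 0} \<in> semialg n"
| pos: "g \<in> alg_poly n \<Longrightarrow> {x \<in> Rn n. g x > 0} \<in> semialg n"
| union: "A \<in> semialg n \<Longrightarrow> B \<in> semialg n \<Longrightarrow> A \<union> B \<in> semialg n"
| inter: "A \<in> semialg n \<Longrightarrow> B \<in> semialg n \<Longrightarrow> A \<inter> B \<in> semialg n"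

definition nonempty_interior :: "nat \<Rightarrow> (nat \<Rightarrow> real) set \<Rightarrow> bool" where
  "nonempty_interior n X \<longleftrightarrow>
     (\<exists>a b. (\<forall>i<n. a i < b i) \<and> {y \<in> Rn n. \<forall>i<n. a i < y i \<and> y i < b i} \<subseteq> X)"

definition SA :: "nat \<Rightarrow> (nat \<Rightarrow> real) set set" where
  "SA n = {X \<in> semialg n. nonempty_interior n X}"

definition period :: "real \<Rightarrow> bool" where
  "period p \<longleftrightarrow> (\<exists>n X P Q. 0 < n \<and> X \<in> SA n \<and> P \<in> alg_poly n \<and> Q \<in> alg_poly n \<and>
      (\<exists>y\<in>X. Q y \<noteq> 0) \<and>
      set_integrable (lebn n) X (\<lambda>y. P y / Q y) \<and>
      p = set_lebesgue_integral (lebn n) X (\<lambda>y. P y / Q y))"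

definition period_deg :: "real \<Rightarrow> nat" where
  "period_deg p = (if p = 0 then 0 else
     (LEAST k. 0 < k \<and> (\<exists>K. K \<in> SA k \<and> compact K \<and> \<bar>p\<bar> = measure (lebn k) K)))"

end

theory Submission
  imports Defs
begin

definition Msc :: "real \<Rightarrow> (nat \<Rightarrow> real) \<Rightarrow> (nat \<Rightarrow> real)" where
  "Msc d y = y(0 := d * y 0)"

lemma Msc_Rn: "0 < k \<Longrightarrow> Msc d y \<in> Rn k \<longleftrightarrow> y \<in> Rn k"
  unfolding Msc_def PiE_iff extensional_def
  by (auto simp: fun_upd_def)

lemma alg_poly_Msc:
  assumes "f \<in> alg_poly k" "0 < k" "real_alg d"
  shows "(\<lambda>y. f (Msc d y)) \<in> alg_poly k"
  using assms(1)
proof induction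
  case (const c) then show ?case by (simp add: alg_poly.const)
next
  case (var i)
  show ?case
  proof (cases "i = 0")
    case True
    have "(\<lambda>y. d * y 0) \<in> alg_poly k"
      by (rule alg_poly.mult[OF alg_poly.const[OF assms(3)] alg_poly.var[OF assms(2)]])
    then show ?thesis using True by (simp add: Msc_def)
  next
    case False
    then show ?thesis using var by (simp add: Msc_def alg_poly.var)
  qed
next
  case (add f g) then show ?case by (simp add: alg_poly.add)
next
  case (mult f g) then show ?case by (simp add: alg_poly.mult)
qed

lemma semialg_Msc:
  assumes "A \<in> semialg k" "0 < k" "real_alg d"
  shows "{y \<in> Rn k. Msc d y \<in> A} \<in> semialg k"
  using assms(1)
proof induction
  case (zero f)
  have "{y \<in> Rn k. Msc d y \<in> {x \<in> Rn k. f x = 0}} = {y \<in> Rn k. f (Msc d y) = 0}"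
    by (auto simp: Msc_Rn[OF assms(2)])
  then show ?case using semialg.zero[OF alg_poly_Msc[OF zero assms(2,3)]] by simp
next
  case (pos f)
  have "{y \<in> Rn k. Msc d y \<in> {x \<in> Rn k. f x > 0}} = {y \<in> Rn k. f (Msc d y) > 0}"
    by (auto simp: Msc_Rn[OF assms(2)])
  then show ?case using semialg.pos[OF alg_poly_Msc[OF pos assms(2,3)]] by simp
next
  case (union A B)
  have "{y \<in> Rn k. Msc d y \<in> A \<union> B} = {y \<in> Rn k. Msc d y \<in> A} \<union> {y \<in> Rn k. Msc d y \<in> B}"
    by auto
  then show ?case using semialg.union[OF union.IH] by simp
next
  case (inter A B)
  have "{y \<in> Rn k. Msc d y \<in> A \<inter> B} = {y \<in> Rn k. Msc d y \<in> A} \<inter> {y \<in> Rn k. Msc d y \<in> B}"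
    by auto
  then show ?case using semialg.inter[OF inter.IH] by simp
qed

lemma semialg_subset: "A \<in> semialg k \<Longrightarrow> A \<subseteq> Rn k"
  by (induction rule: semialg.induct) auto

lemma alg_poly_meas: "f \<in> alg_poly k \<Longrightarrow> f \<in> borel_measurable (lebn k)"
proof (induction rule: alg_poly.induct)
  case (const c) then show ?case by simp
next
  case (var i) then show ?case
    using measurable_component_singleton[of i "{..<k}" "\<lambda>_. lborel"] by simp
next
  case (add f g) then show ?case using borel_measurable_add by blast
next
  case (mult f g) then show ?case using borel_measurable_times by blast
qed

lemma semialg_sets: "A \<in> semialg k \<Longrightarrow> A \<in> sets (lebn k)"
proof (induction rule: semialg.induct)
  case (zero f)
  have "f -` {0} \<inter> space (lebn k) \<in> sets (lebn k)"
    by (rule measurable_sets[OF alg_poly_meas[OF zero]]) simp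
  moreover have "f -` {0} \<inter> space (lebn k) = {x \<in> Rn k. f x = 0}"
    by (auto simp: space_PiM)
  ultimately show ?case by simp
next
  case (pos g)
  have "g -` {0<..} \<inter> space (lebn k) \<in> sets (lebn k)"
    by (rule measurable_sets[OF alg_poly_meas[OF pos]]) simp
  moreover have "g -` {0<..} \<inter> space (lebn k) = {x \<in> Rn k. g x > 0}"
    by (auto simp: space_PiM)
  ultimately show ?case by simp
next
  case (union A B) then show ?case using sets.Un by blast
next
  case (inter A B) then show ?case using sets.Int by blast
qed

lemma Msc_inv: "c \<noteq> 0 \<Longrightarrow> Msc (1/c) (Msc c y) = y" "c \<noteq> 0 \<Longrightarrow> Msc c (Msc (1/c) y) = y"
  by (auto simp: Msc_def)

lemma image_Msc:
  assumes "K \<subseteq> Rn k" "0 < k" "c \<noteq> 0"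
  shows "Msc c ` K = {y \<in> Rn k. Msc (1/c) y \<in> K}"
proof
  show "Msc c ` K \<subseteq> {y \<in> Rn k. Msc (1/c) y \<in> K}"
  proof
    fix y assume "y \<in> Msc c ` K"
    then obtain x where x: "x \<in> K" "y = Msc c x" by blast
    have "x \<in> Rn k" using assms(1) x(1) by (rule subsetD)
    then have "Msc c x \<in> Rn k" by (simp only: Msc_Rn[OF assms(2)])
    moreover have "Msc (1/c) (Msc c x) \<in> K" using x(1) by (simp only: Msc_inv(1)[OF assms(3)])
    ultimately show "y \<in> {y \<in> Rn k. Msc (1/c) y \<in> K}" using x(2) by simp
  qed
  show "{y \<in> Rn k. Msc (1/c) y \<in> K} \<subseteq> Msc c ` K"
  proof
    fix y assume y: "y \<in> {y \<in> Rn k. Msc (1/c) y \<in> K}"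
    have "y = Msc c (Msc (1/c) y)" by (simp only: Msc_inv(2)[OF assms(3)])
    moreover have "Msc (1/c) y \<in> K" using y by simp
    ultimately show "y \<in> Msc c ` K" by (rule image_eqI)
  qed
qed

lemma cont_Msc: "continuous_on UNIV (Msc c)"
  unfolding Msc_def
proof (intro continuous_on_coordinatewise_then_product)
  fix i :: nat
  show "continuous_on UNIV (\<lambda>x::nat\<Rightarrow>real. (x(0 := c * x 0)) i)"
  proof (cases "i = 0")
    case True
    have "continuous_on UNIV (\<lambda>x::nat\<Rightarrow>real. c * x 0)"
      by (rule continuous_on_mult_left[OF continuous_on_product_coordinates])
    then show ?thesis using True by simp
  next
    case False
    then show ?thesis using continuous_on_product_coordinates[of i] by simp
  qed
qed

lemma fun_upd_meas:
  assumes "x \<in> space (PiM I (\<lambda>_::nat. lborel))" "h \<in> borel_measurable borel"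
  shows "(\<lambda>y. x(i := h y)) \<in> measurable borel (PiM (I \<union> {i}) (\<lambda>_. lborel))"
  by (rule measurable_fun_upd[where J=I]) (use assms in auto)

lemma emeasure_Msc:
  assumes A: "A \<in> semialg k" and k: "0 < k" and c: "c > 0" "real_alg c"
  shows "emeasure (lebn k) {y \<in> Rn k. Msc (1/c) y \<in> A} = ennreal c * emeasure (lebn k) A"
proof -
  interpret P: product_sigma_finite "(\<lambda>_. lborel) :: nat \<Rightarrow> real measure"
    by standard
  define A' where "A' = {y \<in> Rn k. Msc (1/c) y \<in> A}"
  have ra: "real_alg (1/c)" using c(2) unfolding real_alg_def
    by (metis algebraic_inverse inverse_eq_divide)
  have A's: "A' \<in> sets (lebn k)" unfolding A'_def
    by (rule semialg_sets[OF semialg_Msc[OF A k ra]])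
  have As: "A \<in> sets (lebn k)" by (rule semialg_sets[OF A])
  define I where "I = {1..<k}"
  have kI: "{..<k} = insert 0 I" "0 \<notin> I" "finite I" "I \<union> {0} = {..<k}"
    using k unfolding I_def by auto
  have "emeasure (lebn k) A' = (\<integral>\<^sup>+z. indicator A' z \<partial>lebn k)"
    using A's by simp
  also have "\<dots> = (\<integral>\<^sup>+x. (\<integral>\<^sup>+y. indicator A' (x(0 := y)) \<partial>lborel) \<partial>PiM I (\<lambda>_. lborel))"
    unfolding kI(1) by (rule P.product_nn_integral_insert) (use kI A's in \<open>auto simp: kI(1)[symmetric]\<close>)
  also have "\<dots> = (\<integral>\<^sup>+x. (\<integral>\<^sup>+y. ennreal c * indicator A (x(0 := y)) \<partial>lborel) \<partial>PiM I (\<lambda>_. lborel))"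
  proof (rule nn_integral_cong)
    fix x :: "nat \<Rightarrow> real" assume x: "x \<in> space (PiM I (\<lambda>_::nat. lborel))"
    have xy: "x(0 := y) \<in> Rn k" for y :: real
      using x kI by (auto simp: space_PiM PiE_iff extensional_def)
    have ind: "indicator A' (x(0 := y)) = (indicator A (x(0 := y / c)) :: ennreal)" for y::real
      using xy[of y] by (simp add: A'_def Msc_def indicator_def)
    have m1: "(\<lambda>y. x(0 := y / c)) \<in> measurable borel (lebn k)"
      using fun_upd_meas[OF x, of "\<lambda>y. y / c" 0] kI(4) by simp
    have m2: "(\<lambda>y. x(0 := y)) \<in> measurable borel (lebn k)"
      using fun_upd_meas[OF x, of "\<lambda>y. y" 0] kI(4) by simp
    have mf: "(\<lambda>y. indicator A (x(0 := y / c)) :: ennreal) \<in> borel_measurable borel"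
      using measurable_comp[OF m1 borel_measurable_indicator[OF As]] by (simp add: o_def)
    have mg: "(\<lambda>y. indicator A (x(0 := y)) :: ennreal) \<in> borel_measurable borel"
      using measurable_comp[OF m2 borel_measurable_indicator[OF As]] by (simp add: o_def)
    have "(\<integral>\<^sup>+y. indicator A' (x(0 := y)) \<partial>lborel) = (\<integral>\<^sup>+y. indicator A (x(0 := y / c)) \<partial>lborel)"
      by (simp add: ind)
    also have "\<dots> = ennreal \<bar>c\<bar> * (\<integral>\<^sup>+y. indicator A (x(0 := (0 + c * y) / c)) \<partial>lborel)"
      by (rule nn_integral_real_affine[OF mf]) (use c in auto)
    also have "\<dots> = ennreal c * (\<integral>\<^sup>+y. indicator A (x(0 := y)) \<partial>lborel)"
      using c by simp
    also have "\<dots> = (\<integral>\<^sup>+y. ennreal c * indicator A (x(0 := y)) \<partial>lborel)"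
      by (rule nn_integral_cmult[symmetric]) (use mg in simp)
    finally show "(\<integral>\<^sup>+y. indicator A' (x(0 := y)) \<partial>lborel) = (\<integral>\<^sup>+y. ennreal c * indicator A (x(0 := y)) \<partial>lborel)" .
  qed
  also have "\<dots> = (\<integral>\<^sup>+z. ennreal c * indicator A z \<partial>lebn k)"
    unfolding kI(1) by (rule P.product_nn_integral_insert[symmetric]) (use kI As in \<open>auto simp: kI(1)[symmetric]\<close>)
  also have "\<dots> = ennreal c * emeasure (lebn k) A"
    using As by (rule nn_integral_cmult_indicator)
  finally show ?thesis unfolding A'_def .
qed


lemma scale_SA:
  assumes K: "K \<in> SA k" "compact K" and k: "0 < k" and c: "c > 0" "real_alg c"
  shows "\<exists>K'. K' \<in> SA k \<and> compact K' \<and> measure (lebn k) K' = c * measure (lebn k) K"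
proof -
  have ra: "real_alg (1/c)" using c(2) unfolding real_alg_def
    by (metis algebraic_inverse inverse_eq_divide)
  have Ks: "K \<in> semialg k" "nonempty_interior k K" using K(1) by (auto simp: SA_def)
  define K' where "K' = {y \<in> Rn k. Msc (1/c) y \<in> K}"
  have s: "K' \<in> semialg k" unfolding K'_def by (rule semialg_Msc[OF Ks(1) k ra])
  obtain a b where ab: "\<forall>i<k. a i < b i" "{y \<in> Rn k. \<forall>i<k. a i < y i \<and> y i < b i} \<subseteq> K"
    using Ks(2) unfolding nonempty_interior_def by blast
  define a' where "a' = a(0 := c * a 0)"
  define b' where "b' = b(0 := c * b 0)"
  have "nonempty_interior k K'"
    unfolding nonempty_interior_def
  proof (intro exI conjI allI impI)
    fix i assume "i < k" then show "a' i < b' i" using ab(1) c by (auto simp: a'_def b'_def)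
  next
    show "{y \<in> Rn k. \<forall>i<k. a' i < y i \<and> y i < b' i} \<subseteq> K'"
    proof
      fix y assume y: "y \<in> {y \<in> Rn k. \<forall>i<k. a' i < y i \<and> y i < b' i}"
      have yR: "y \<in> Rn k" using y by blast
      have "Msc (1/c) y \<in> {y \<in> Rn k. \<forall>i<k. a i < y i \<and> y i < b i}"
      proof -
        have "Msc (1/c) y \<in> Rn k" using Msc_Rn[OF k] yR by blast
        moreover have "a i < Msc (1/c) y i \<and> Msc (1/c) y i < b i" if i: "i < k" for i
        proof (cases "i = 0")
          case True
          have "c * a 0 < y 0" "y 0 < c * b 0" using y k True by (auto simp: a'_def b'_def)
          then show ?thesis using True c(1) by (auto simp: Msc_def field_simps)
        next
          case False
          then show ?thesis using y i by (auto simp: a'_def b'_def Msc_def)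
        qed
        ultimately show ?thesis by blast
      qed
      then show "y \<in> K'" using ab(2) yR unfolding K'_def by blast
    qed
  qed
  then have SA': "K' \<in> SA k" using s by (simp add: SA_def)
  have "K' = Msc c ` K" unfolding K'_def
    by (rule image_Msc[symmetric]) (use semialg_subset[OF Ks(1)] k c in auto)
  then have cK': "compact K'"
    using compact_continuous_image[OF continuous_on_subset[OF cont_Msc] K(2)] by auto
  have "measure (lebn k) K' = enn2real (ennreal c * emeasure (lebn k) K)"
    unfolding measure_def K'_def using emeasure_Msc[OF Ks(1) k c] by simp
  also have "\<dots> = c * measure (lebn k) K"
    using c by (simp add: measure_def enn2real_mult)
  finally show ?thesis using SA' cK' by blast
qed

theorem mainTheorem7:
  fixes x p :: real
  assumes "real_alg x" and "x \<noteq> 0"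
    and "period p" and "\<not> real_alg p"
  shows "period_deg (x * p) = period_deg p"
proof -
  have p0: "p \<noteq> 0" using assms(4) by (auto simp: real_alg_def)
  have xp0: "x * p \<noteq> 0" using p0 assms(2) by simp
  have ax: "real_alg \<bar>x\<bar>" "\<bar>x\<bar> > 0" using assms(1,2) by (auto simp: real_alg_def)
  have aix: "real_alg (1/\<bar>x\<bar>)" "1/\<bar>x\<bar> > 0" using ax unfolding real_alg_def
    by (auto simp: inverse_eq_divide[symmetric])
  have eq: "(0 < k \<and> (\<exists>K. K \<in> SA k \<and> compact K \<and> \<bar>x * p\<bar> = measure (lebn k) K)) \<longleftrightarrow>
            (0 < k \<and> (\<exists>K. K \<in> SA k \<and> compact K \<and> \<bar>p\<bar> = measure (lebn k) K))" for k
  proof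
    assume h: "0 < k \<and> (\<exists>K. K \<in> SA k \<and> compact K \<and> \<bar>x * p\<bar> = measure (lebn k) K)"
    then obtain K where K: "K \<in> SA k" "compact K" "\<bar>x * p\<bar> = measure (lebn k) K" by blast
    obtain K' where K': "K' \<in> SA k" "compact K'" "measure (lebn k) K' = 1/\<bar>x\<bar> * measure (lebn k) K"
      using scale_SA[OF K(1,2) _ aix(2,1)] h by blast
    have "measure (lebn k) K' = (\<bar>x\<bar> * \<bar>p\<bar>) / \<bar>x\<bar>" using K(3) K'(3) by (simp add: abs_mult)
    also have "\<dots> = \<bar>p\<bar>" using ax(2) by simp
    finally have "\<bar>p\<bar> = measure (lebn k) K'" by simp
    then show "0 < k \<and> (\<exists>K. K \<in> SA k \<and> compact K \<and> \<bar>p\<bar> = measure (lebn k) K)"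
      using h K' by blast
  next
    assume h: "0 < k \<and> (\<exists>K. K \<in> SA k \<and> compact K \<and> \<bar>p\<bar> = measure (lebn k) K)"
    then obtain K where K: "K \<in> SA k" "compact K" "\<bar>p\<bar> = measure (lebn k) K" by blast
    obtain K' where K': "K' \<in> SA k" "compact K'" "measure (lebn k) K' = \<bar>x\<bar> * measure (lebn k) K"
      using scale_SA[OF K(1,2) _ ax(2,1)] h by blast
    have "\<bar>x * p\<bar> = measure (lebn k) K'" using K(3) K'(3) by (simp add: abs_mult)
    then show "0 < k \<and> (\<exists>K. K \<in> SA k \<and> compact K \<and> \<bar>x * p\<bar> = measure (lebn k) K)"
      using h K' by blast
  qed
  show ?thesis unfolding period_deg_def using p0 xp0 eq by simp
qed

end
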